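(* Let $|\Psi\rangle$ be a normalized state of the periodic chain which is simultaneously an eigenvector of $H$ and of the one-site translation operator $U$. Fix indices $\alpha\neq\beta$ and define $$C(x)=\langle\Psi|\,J_\alpha(x)\,q_\beta(0)-q_\alpha(x)\,J_\beta(1)\,|\Psi\rangle .$$ Then $C(x)$ is independent of $x$, i.e. $C(x+1)=C(x)$ for all $x$.
   Context: Consider a spin chain of length $L$ with periodic boundary conditions, Hilbert space $(\mathbb{C}^N)^{\otimes L}$, sites labelled by $x\in\mathbb{Z}$ modulo $L$. Let $U$ be the unitary one-site translation operator. A local operator family $\mathcal{O}(x)$ is called translation covariant if $\mathcal{O}(x+1)=U\mathcal{O}(x)U^{-1}$. The chain has a Hamiltonian $H=\sum_{x=1}^L h(x)$ with $h(x)$ local and translation covariant, and a family of mutually commuting conserved charges $Q_\alpha=\sum_{x=1}^L q_\alpha(x)$, with $q_\alpha(x)$ translation covariant local operators (charge densities), $[Q_\alpha,Q_\beta]=0$, $[H,Q_\alpha]=0$, $[U,Q_\alpha]=[U,H]=0$. The current operators $J_\alpha(x)$ are translation covariant local operators defined by the continuity equation $$ i\,[H,q_\alpha(x)]=J_\alpha(x)-J_\alpha(x+1)\quad\text{for all }x.$$ *)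

theory Defs
  imports Complex_Main
begin

text \<open>Periodic spin chain of length L with local dimension N.
  A basis configuration is a function s :: nat => nat with s i < N for i < L
  (site i carries the basis state s i of C^N) and s i = 0 for i >= L.
  The Hilbert space (C^N)^{tensor L} is the space of functions configs N L -> complex;
  operators are matrices indexed by configurations.  Values outside configs N L are
  irrelevant: all equalities between operators/vectors are taken on configs N L.\<close>

type_synonym config = "nat \<Rightarrow> nat"
type_synonym cvec = "config \<Rightarrow> complex"
type_synonym cop = "config \<Rightarrow> config \<Rightarrow> complex"

definition configs :: "nat \<Rightarrow> nat \<Rightarrow> config set" where
  "configs N L = {s. (\<forall>i<L. s i < N) \<and> (\<forall>i\<ge>L. s i = 0)}"

definition op_mult :: "nat \<Rightarrow> nat \<Rightarrow> cop \<Rightarrow> cop \<Rightarrow> cop" where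
  "op_mult N L A B = (\<lambda>s t. \<Sum>u\<in>configs N L. A s u * B u t)"

definition op_add :: "cop \<Rightarrow> cop \<Rightarrow> cop" where
  "op_add A B = (\<lambda>s t. A s t + B s t)"

definition op_diff :: "cop \<Rightarrow> cop \<Rightarrow> cop" where
  "op_diff A B = (\<lambda>s t. A s t - B s t)"

definition op_scale :: "complex \<Rightarrow> cop \<Rightarrow> cop" where
  "op_scale c A = (\<lambda>s t. c * A s t)"

definition op_adj :: "cop \<Rightarrow> cop" where
  "op_adj A = (\<lambda>s t. cnj (A t s))"

definition op_id :: cop where
  "op_id = (\<lambda>s t. if s = t then 1 else 0)"

definition op_sum :: "nat \<Rightarrow> (int \<Rightarrow> cop) \<Rightarrow> cop" where
  "op_sum L f = (\<lambda>s t. \<Sum>x\<in>{0..<int L}. f x s t)"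

definition op_eq :: "nat \<Rightarrow> nat \<Rightarrow> cop \<Rightarrow> cop \<Rightarrow> bool" where
  "op_eq N L A B \<longleftrightarrow> (\<forall>s\<in>configs N L. \<forall>t\<in>configs N L. A s t = B s t)"

definition commutator :: "nat \<Rightarrow> nat \<Rightarrow> cop \<Rightarrow> cop \<Rightarrow> cop" where
  "commutator N L A B = op_diff (op_mult N L A B) (op_mult N L B A)"

definition hermitian :: "nat \<Rightarrow> nat \<Rightarrow> cop \<Rightarrow> bool" where
  "hermitian N L A \<longleftrightarrow> op_eq N L A (op_adj A)"

definition op_apply :: "nat \<Rightarrow> nat \<Rightarrow> cop \<Rightarrow> cvec \<Rightarrow> cvec" where
  "op_apply N L A v = (\<lambda>s. \<Sum>t\<in>configs N L. A s t * v t)"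

definition inner :: "nat \<Rightarrow> nat \<Rightarrow> cvec \<Rightarrow> cvec \<Rightarrow> complex" where
  "inner N L v w = (\<Sum>s\<in>configs N L. cnj (v s) * w s)"

definition vec_eq :: "nat \<Rightarrow> nat \<Rightarrow> cvec \<Rightarrow> cvec \<Rightarrow> bool" where
  "vec_eq N L v w \<longleftrightarrow> (\<forall>s\<in>configs N L. v s = w s)"

definition expval :: "nat \<Rightarrow> nat \<Rightarrow> cvec \<Rightarrow> cop \<Rightarrow> complex" where
  "expval N L \<Psi> A = inner N L \<Psi> (op_apply N L A \<Psi>)"

text \<open>One-site translation: the content of site i is moved to site i+1 (mod L),
  i.e. U |s> = |rot s> with (rot s)(i) = s(i-1 mod L).\<close>
definition rot :: "nat \<Rightarrow> config \<Rightarrow> config" where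
  "rot L t = (\<lambda>i. if i < L then t ((i + L - 1) mod L) else 0)"

definition transl :: "nat \<Rightarrow> cop" where
  "transl L = (\<lambda>s t. if s = rot L t then 1 else 0)"

definition acts_on :: "nat \<Rightarrow> nat \<Rightarrow> nat set \<Rightarrow> cop \<Rightarrow> bool" where
  "acts_on N L S A \<longleftrightarrow>
     (\<forall>s\<in>configs N L. \<forall>t\<in>configs N L.
        (\<exists>i<L. i \<notin> S \<and> s i \<noteq> t i) \<longrightarrow> A s t = 0) \<and>
     (\<forall>s\<in>configs N L. \<forall>t\<in>configs N L. \<forall>s'\<in>configs N L. \<forall>t'\<in>configs N L.
        (\<forall>i<L. i \<notin> S \<longrightarrow> s i = t i \<and> s' i = t' i) \<and>
        (\<forall>i\<in>S. s i = s' i \<and> t i = t' i) \<longrightarrow> A s t = A s' t')"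

definition local_op :: "nat \<Rightarrow> nat \<Rightarrow> cop \<Rightarrow> bool" where
  "local_op N L A \<longleftrightarrow> (\<exists>S. S \<subseteq> {..<L} \<and> acts_on N L S A)"

text \<open>Translation covariant local operator family O(x), x in Z (sites mod L):
  O(x+1) = U O(x) U^{-1}, where U^{-1} = U^dagger (U is a permutation matrix).\<close>
definition transl_cov :: "nat \<Rightarrow> nat \<Rightarrow> (int \<Rightarrow> cop) \<Rightarrow> bool" where
  "transl_cov N L F \<longleftrightarrow>
     (\<forall>x. op_eq N L (F (x + 1)) (op_mult N L (op_mult N L (transl L) (F x)) (op_adj (transl L))))"

definition local_cov_family :: "nat \<Rightarrow> nat \<Rightarrow> (int \<Rightarrow> cop) \<Rightarrow> bool" where
  "local_cov_family N L F \<longleftrightarrow> (\<forall>x. local_op N L (F x)) \<and> transl_cov N L F"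

end

theory Submission imports Defs "HOL-Library.FuncSet" begin

lemma fin_configs: "finite (configs N L)"
proof -
  have "configs N L \<subseteq> (\<lambda>f i. if i < L then f i else 0) ` (PiE {..<L} (\<lambda>_. {..<N}))"
  proof
    fix s assume s: "s \<in> configs N L"
    have "s = (\<lambda>i. if i < L then restrict s {..<L} i else 0)"
      using s by (auto simp: configs_def fun_eq_iff)
    moreover have "restrict s {..<L} \<in> PiE {..<L} (\<lambda>_. {..<N})" using s by (auto simp: configs_def)
    ultimately show "s \<in> (\<lambda>f i. if i < L then f i else 0) ` (PiE {..<L} (\<lambda>_. {..<N}))" by blast
  qed
  then show ?thesis by (rule finite_subset) (auto intro: finite_PiE)
qed

lemma apply_mult: "op_apply N L (op_mult N L A B) v = op_apply N L A (op_apply N L B v)"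
proof
  fix s
  have "op_apply N L (op_mult N L A B) v s = (\<Sum>t\<in>configs N L. \<Sum>u\<in>configs N L. A s u * (B u t * v t))"
    unfolding op_apply_def op_mult_def by (simp add: sum_distrib_right mult.assoc)
  also have "\<dots> = (\<Sum>u\<in>configs N L. \<Sum>t\<in>configs N L. A s u * (B u t * v t))" by (rule sum.swap)
  also have "\<dots> = op_apply N L A (op_apply N L B v) s"
    unfolding op_apply_def by (simp add: sum_distrib_left)
  finally show "op_apply N L (op_mult N L A B) v s = op_apply N L A (op_apply N L B v) s" .
qed

lemma inner_adj: "inner N L v (op_apply N L A w) = inner N L (op_apply N L (op_adj A) v) w"
proof -
  have "inner N L v (op_apply N L A w) = (\<Sum>s\<in>configs N L. \<Sum>t\<in>configs N L. cnj (v s) * (A s t * w t))"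
    unfolding inner_def op_apply_def by (simp add: sum_distrib_left)
  also have "\<dots> = (\<Sum>t\<in>configs N L. \<Sum>s\<in>configs N L. cnj (v s) * (A s t * w t))" by (rule sum.swap)
  also have "\<dots> = inner N L (op_apply N L (op_adj A) v) w"
    unfolding inner_def op_apply_def op_adj_def by (simp add: sum_distrib_right sum_distrib_left mult_ac)
  finally show ?thesis .
qed

lemma apply_cong_op: "op_eq N L A B \<Longrightarrow> s \<in> configs N L \<Longrightarrow> op_apply N L A v s = op_apply N L B v s"
  unfolding op_eq_def op_apply_def by auto

lemma apply_cong_vec: "vec_eq N L v w \<Longrightarrow> op_apply N L A v = op_apply N L A w"
  unfolding vec_eq_def op_apply_def by (auto intro!: sum.cong)

lemma inner_cong: "vec_eq N L v v' \<Longrightarrow> vec_eq N L w w' \<Longrightarrow> inner N L v w = inner N L v' w'"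
  unfolding vec_eq_def inner_def by (auto intro!: sum.cong)

lemma apply_diff: "op_apply N L (op_diff A B) v = (\<lambda>s. op_apply N L A v s - op_apply N L B v s)"
  unfolding op_apply_def op_diff_def by (auto simp: algebra_simps sum_subtractf)

lemma apply_scale: "op_apply N L (op_scale c A) v = (\<lambda>s. c * op_apply N L A v s)"
  unfolding op_apply_def op_scale_def by (auto simp: algebra_simps sum_distrib_left)

lemma apply_smul: "op_apply N L A (\<lambda>s. c * v s) = (\<lambda>s. c * op_apply N L A v s)"
  unfolding op_apply_def by (auto simp: algebra_simps sum_distrib_left)

lemma apply_vdiff: "op_apply N L A (\<lambda>s. v s - w s) = (\<lambda>s. op_apply N L A v s - op_apply N L A w s)"
  unfolding op_apply_def by (auto simp: algebra_simps sum_subtractf)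

lemma apply_vadd: "op_apply N L A (\<lambda>s. v s + w s) = (\<lambda>s. op_apply N L A v s + op_apply N L A w s)"
  unfolding op_apply_def by (auto simp: algebra_simps sum.distrib)

lemma inner_smul: "inner N L v (\<lambda>s. c * w s) = c * inner N L v w"
  unfolding inner_def by (auto simp: algebra_simps sum_distrib_left)

lemma inner_smul1: "inner N L (\<lambda>s. c * v s) w = cnj c * inner N L v w"
  unfolding inner_def by (auto simp: algebra_simps sum_distrib_left)

lemma inner_vdiff: "inner N L v (\<lambda>s. w s - w' s) = inner N L v w - inner N L v w'"
  unfolding inner_def by (auto simp: algebra_simps sum_subtractf)

lemma inner_vadd: "inner N L v (\<lambda>s. w s + w' s) = inner N L v w + inner N L v w'"
  unfolding inner_def by (auto simp: algebra_simps sum.distrib)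

lemma apply_id: "s \<in> configs N L \<Longrightarrow> op_apply N L op_id v s = v s"
proof -
  assume s: "s \<in> configs N L"
  have "op_apply N L op_id v s = (\<Sum>t\<in>configs N L. if s = t then v t else 0)"
    unfolding op_apply_def op_id_def by (rule sum.cong) auto
  also have "\<dots> = v s" using fin_configs[of N L] s by simp
  finally show ?thesis .
qed

lemma rot_configs: "t \<in> configs N L \<Longrightarrow> rot L t \<in> configs N L"
  unfolding configs_def rot_def by auto

lemma rot_inj: assumes "s \<in> configs N L" "t \<in> configs N L" "rot L s = rot L t" shows "s = t"
proof
  fix j
  show "s j = t j"
  proof (cases "j < L")
    case True
    define i where "i = (j + 1) mod L"
    have iL: "i < L" using True by (simp add: i_def)
    have "(i + L - 1) mod L = j"
    proof (cases "j + 1 = L")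
      case True then show ?thesis using \<open>j<L\<close> by (simp add: i_def)
    next
      case False then have "i = j + 1" using \<open>j<L\<close> by (simp add: i_def)
      then show ?thesis using \<open>j<L\<close> by simp
    qed
    then show ?thesis using fun_cong[OF assms(3), of i] iL by (simp add: rot_def)
  next
    case False then show ?thesis using assms(1,2) by (simp add: configs_def)
  qed
qed

lemma UdU: "op_eq N L (op_mult N L (op_adj (transl L)) (transl L)) op_id"
  unfolding op_eq_def op_mult_def op_adj_def transl_def op_id_def
proof (intro ballI)
  fix s t assume s: "s \<in> configs N L" and t: "t \<in> configs N L"
  have "(\<Sum>u\<in>configs N L. cnj (if u = rot L s then 1 else 0) * (if u = rot L t then 1 else 0))
      = (\<Sum>u\<in>configs N L. if u = rot L s then (if rot L s = rot L t then 1 else 0) else 0)"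
    by (rule sum.cong) auto
  also have "\<dots> = (if rot L s = rot L t then 1 else 0)"
    using fin_configs[of N L] rot_configs[OF s] by simp
  also have "\<dots> = (if s = t then 1 else 0)" using rot_inj[OF s t] by auto
  finally show "(\<Sum>u\<in>configs N L. cnj (if u = rot L s then 1 else 0) * (if u = rot L t then 1 else 0)) = (if s = t then 1 else 0)" .
qed


lemma H_herm:
  assumes "\<And>x. hermitian N L (h x)"
  shows "op_eq N L (op_adj (op_sum L h)) (op_sum L h)"
  unfolding op_eq_def
proof (intro ballI)
  fix s t assume s: "s \<in> configs N L" and t: "t \<in> configs N L"
  have e: "cnj (h x t s) = h x s t" for x
    using assms[of x] s t unfolding hermitian_def op_eq_def op_adj_def by metis
  show "op_adj (op_sum L h) s t = op_sum L h s t"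
    unfolding op_adj_def op_sum_def cnj_sum e ..
qed

lemma transl_P:
  assumes A': "op_eq N L A' (op_mult N L (op_mult N L (transl L) A) (op_adj (transl L)))"
    and B': "op_eq N L B' (op_mult N L (op_mult N L (transl L) B) (op_adj (transl L)))"
    and mu: "vec_eq N L (op_apply N L (transl L) \<Psi>) (\<lambda>s. \<mu> * \<Psi> s)"
    and norm: "inner N L \<Psi> \<Psi> = 1"
  shows "inner N L \<Psi> (op_apply N L A' (op_apply N L B' \<Psi>))
       = inner N L \<Psi> (op_apply N L A (op_apply N L B \<Psi>))"
proof -
  let ?U = "transl L" and ?Ud = "op_adj (transl L)" and ?C = "configs N L"
  have UdU: "vec_eq N L (op_apply N L ?Ud (op_apply N L ?U w)) w" for w
    unfolding vec_eq_def using apply_cong_op[OF UdU] apply_id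
    by (metis apply_mult)
  have "vec_eq N L \<Psi> (op_apply N L ?Ud (op_apply N L ?U \<Psi>))"
    using UdU unfolding vec_eq_def by auto
  also have "op_apply N L ?Ud (op_apply N L ?U \<Psi>) = (\<lambda>s. \<mu> * op_apply N L ?Ud \<Psi> s)"
    using apply_cong_vec[OF mu] apply_smul by metis
  finally have PsiUd: "vec_eq N L \<Psi> (\<lambda>s. \<mu> * op_apply N L ?Ud \<Psi> s)" .
  have mu0: "\<mu> \<noteq> 0"
  proof
    assume m0: "\<mu> = 0"
    have "\<forall>s\<in>configs N L. \<Psi> s = 0" using PsiUd m0 unfolding vec_eq_def by simp
    then have z: "vec_eq N L \<Psi> (\<lambda>s. 0)" unfolding vec_eq_def by simp
    have "inner N L \<Psi> \<Psi> = inner N L (\<lambda>s. 0) (\<lambda>s. 0)" using inner_cong[OF z z] .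
    then show False using norm by (simp add: inner_def)
  qed
  have Ud: "vec_eq N L (op_apply N L ?Ud \<Psi>) (\<lambda>s. inverse \<mu> * \<Psi> s)"
    using PsiUd mu0 unfolding vec_eq_def by (auto simp: field_simps)
  have "1 = inner N L \<Psi> \<Psi>" using norm by simp
  also have "\<dots> = inner N L \<Psi> (op_apply N L ?Ud (op_apply N L ?U \<Psi>))"
    by (rule inner_cong) (auto simp: vec_eq_def UdU[unfolded vec_eq_def])
  also have "\<dots> = inner N L (op_apply N L (op_adj ?Ud) \<Psi>) (op_apply N L ?U \<Psi>)"
    by (rule inner_adj)
  also have "op_adj ?Ud = ?U" by (simp add: op_adj_def)
  also have "inner N L (op_apply N L ?U \<Psi>) (op_apply N L ?U \<Psi>) = inner N L (\<lambda>s. \<mu> * \<Psi> s) (\<lambda>s. \<mu> * \<Psi> s)"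
    by (rule inner_cong[OF mu mu])
  also have "\<dots> = cnj \<mu> * \<mu>" using norm by (simp add: inner_smul inner_smul1)
  finally have mm: "cnj \<mu> * \<mu> = 1" by simp
  define w where "w = op_apply N L B \<Psi>"
  have v1: "vec_eq N L (op_apply N L B' \<Psi>) (\<lambda>s. inverse \<mu> * op_apply N L ?U w s)"
  proof -
    have "vec_eq N L (op_apply N L B' \<Psi>) (op_apply N L (op_mult N L (op_mult N L ?U B) ?Ud) \<Psi>)"
      using apply_cong_op[OF B'] by (simp add: vec_eq_def)
    moreover have "op_apply N L (op_mult N L (op_mult N L ?U B) ?Ud) \<Psi> = (\<lambda>s. inverse \<mu> * op_apply N L ?U w s)"
      unfolding apply_mult w_def apply_cong_vec[OF Ud] apply_smul ..
    ultimately show ?thesis by simp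
  qed
  define z where "z = op_apply N L A w"
  have v2: "vec_eq N L (op_apply N L A' (op_apply N L B' \<Psi>)) (\<lambda>s. inverse \<mu> * op_apply N L ?U z s)"
  proof -
    have "op_apply N L A' (op_apply N L B' \<Psi>) = op_apply N L A' (\<lambda>s. inverse \<mu> * op_apply N L ?U w s)"
      by (rule apply_cong_vec[OF v1])
    moreover have "vec_eq N L (op_apply N L A' (\<lambda>s. inverse \<mu> * op_apply N L ?U w s))
      (op_apply N L (op_mult N L (op_mult N L ?U A) ?Ud) (\<lambda>s. inverse \<mu> * op_apply N L ?U w s))"
      using apply_cong_op[OF A'] by (simp add: vec_eq_def)
    moreover have "op_apply N L (op_mult N L (op_mult N L ?U A) ?Ud) (\<lambda>s. inverse \<mu> * op_apply N L ?U w s)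
       = (\<lambda>s. inverse \<mu> * op_apply N L ?U z s)"
      unfolding apply_mult apply_smul z_def apply_cong_vec[OF UdU] ..
    ultimately show ?thesis by simp
  qed
  have "inner N L \<Psi> (op_apply N L A' (op_apply N L B' \<Psi>)) = inner N L \<Psi> (\<lambda>s. inverse \<mu> * op_apply N L ?U z s)"
    by (rule inner_cong[OF _ v2]) (simp add: vec_eq_def)
  also have "\<dots> = inverse \<mu> * inner N L (op_apply N L ?Ud \<Psi>) z"
    by (simp add: inner_smul inner_adj)
  also have "inner N L (op_apply N L ?Ud \<Psi>) z = inner N L (\<lambda>s. inverse \<mu> * \<Psi> s) z"
    by (rule inner_cong[OF Ud]) (simp add: vec_eq_def)
  also have "\<dots> = cnj (inverse \<mu>) * inner N L \<Psi> z" by (rule inner_smul1)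
  finally have "inner N L \<Psi> (op_apply N L A' (op_apply N L B' \<Psi>)) = inverse (cnj \<mu> * \<mu>) * inner N L \<Psi> z"
    by (simp add: complex_cnj_inverse field_simps)
  then show ?thesis using mm by (simp add: z_def w_def)
qed


theorem mainTheorem1:
  fixes N L :: nat
    and h :: "int \<Rightarrow> cop"
    and q J :: "'a \<Rightarrow> int \<Rightarrow> cop"
    and \<Psi> :: cvec
    and \<alpha> \<beta> :: 'a
  assumes "N \<ge> 1" and "L \<ge> 1"
    and h_loc: "local_cov_family N L h"
    and h_herm: "\<And>x. hermitian N L (h x)"
    and q_loc: "\<And>a. local_cov_family N L (q a)"
    and J_loc: "\<And>a. local_cov_family N L (J a)"
    and QQ: "\<And>a b. op_eq N L (commutator N L (op_sum L (q a)) (op_sum L (q b))) (\<lambda>_ _. 0)"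
    and HQ: "\<And>a. op_eq N L (commutator N L (op_sum L h) (op_sum L (q a))) (\<lambda>_ _. 0)"
    and UQ: "\<And>a. op_eq N L (commutator N L (transl L) (op_sum L (q a))) (\<lambda>_ _. 0)"
    and UH: "op_eq N L (commutator N L (transl L) (op_sum L h)) (\<lambda>_ _. 0)"
    and continuity: "\<And>a x. op_eq N L
        (op_scale \<i> (commutator N L (op_sum L h) (q a x)))
        (op_diff (J a x) (J a (x + 1)))"
    and norm: "inner N L \<Psi> \<Psi> = 1"
    and eigH: "\<exists>E. vec_eq N L (op_apply N L (op_sum L h) \<Psi>) (\<lambda>s. E * \<Psi> s)"
    and eigU: "\<exists>\<mu>. vec_eq N L (op_apply N L (transl L) \<Psi>) (\<lambda>s. \<mu> * \<Psi> s)"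
    and "\<alpha> \<noteq> \<beta>"
  shows "\<forall>x::int.
     expval N L \<Psi> (op_diff (op_mult N L (J \<alpha> (x + 1)) (q \<beta> 0)) (op_mult N L (q \<alpha> (x + 1)) (J \<beta> 1)))
   = expval N L \<Psi> (op_diff (op_mult N L (J \<alpha> x) (q \<beta> 0)) (op_mult N L (q \<alpha> x) (J \<beta> 1)))"
proof
  fix x :: int
  define H where "H = op_sum L h"
  obtain E where HPsi: "vec_eq N L (op_apply N L H \<Psi>) (\<lambda>s. E * \<Psi> s)" using eigH H_def by auto
  obtain \<mu> where UPsi: "vec_eq N L (op_apply N L (transl L) \<Psi>) (\<lambda>s. \<mu> * \<Psi> s)" using eigU by auto
  define P where "P A B = inner N L \<Psi> (op_apply N L A (op_apply N L B \<Psi>))" for A B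
  have ev: "expval N L \<Psi> (op_diff (op_mult N L A B) (op_mult N L C D)) = P A B - P C D" for A B C D
    unfolding expval_def P_def apply_diff apply_mult inner_vdiff ..
  have cont: "vec_eq N L (op_apply N L (J a (y+1)) w) (\<lambda>s. op_apply N L (J a y) w s
     - \<i> * (op_apply N L H (op_apply N L (q a y) w) s - op_apply N L (q a y) (op_apply N L H w) s))" for a y w
    unfolding vec_eq_def
  proof
    fix s assume s: "s \<in> configs N L"
    have "op_apply N L (op_scale \<i> (commutator N L H (q a y))) w s = op_apply N L (op_diff (J a y) (J a (y + 1))) w s"
      using apply_cong_op[OF continuity[of a y, folded H_def] s] .
    then show "op_apply N L (J a (y+1)) w s = op_apply N L (J a y) w s
     - \<i> * (op_apply N L H (op_apply N L (q a y) w) s - op_apply N L (q a y) (op_apply N L H w) s)"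
      unfolding commutator_def apply_scale apply_diff apply_mult by simp
  qed
  have Hleft: "inner N L \<Psi> (op_apply N L H z) = cnj E * inner N L \<Psi> z" for z
  proof -
    have "inner N L \<Psi> (op_apply N L H z) = inner N L (op_apply N L (op_adj H) \<Psi>) z" by (rule inner_adj)
    also have "\<dots> = inner N L (\<lambda>s. E * \<Psi> s) z"
    proof (rule inner_cong)
      show "vec_eq N L (op_apply N L (op_adj H) \<Psi>) (\<lambda>s. E * \<Psi> s)"
        using HPsi apply_cong_op[OF H_herm[of N L h, OF h_herm, folded H_def]] by (simp add: vec_eq_def)
    qed (simp add: vec_eq_def)
    finally show ?thesis by (simp add: inner_smul1)
  qed
  have Ereal: "cnj E = E"
  proof -
    have "inner N L \<Psi> (op_apply N L H \<Psi>) = inner N L \<Psi> (\<lambda>s. E * \<Psi> s)"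
      by (rule inner_cong[OF _ HPsi]) (simp add: vec_eq_def)
    then show ?thesis using Hleft[of \<Psi>] norm by (simp add: inner_smul)
  qed
  have Hright: "op_apply N L B (op_apply N L H \<Psi>) = (\<lambda>s. E * op_apply N L B \<Psi> s)" for B
    using apply_cong_vec[OF HPsi] apply_smul by metis
  define a where "a = q \<alpha> x"
  define b where "b = q \<beta> 0"
  have step1: "P (J \<alpha> (x+1)) b = P (J \<alpha> x) b
      - \<i> * (cnj E * P a b - inner N L \<Psi> (op_apply N L a (op_apply N L H (op_apply N L b \<Psi>))))"
  proof -
    have "P (J \<alpha> (x+1)) b = inner N L \<Psi> (\<lambda>s. op_apply N L (J \<alpha> x) (op_apply N L b \<Psi>) s
     - \<i> * (op_apply N L H (op_apply N L a (op_apply N L b \<Psi>)) s - op_apply N L a (op_apply N L H (op_apply N L b \<Psi>)) s))"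
      unfolding P_def a_def by (rule inner_cong[OF _ cont]) (simp add: vec_eq_def)
    then show ?thesis
      by (simp add: inner_vdiff inner_smul Hleft P_def apply_mult)
  qed
  have tr: "P (q \<alpha> (x+1)) (J \<beta> 1) = P a (J \<beta> 0)"
    unfolding P_def a_def
    apply (rule transl_P[OF _ _ UPsi norm])
    using q_loc[of \<alpha>] J_loc[of \<beta>] unfolding local_cov_family_def transl_cov_def
    by (metis add_0)+
  have step2: "P a (J \<beta> 0) = P a (J \<beta> 1)
      + \<i> * (inner N L \<Psi> (op_apply N L a (op_apply N L H (op_apply N L b \<Psi>))) - E * P a b)"
  proof -
    have v: "vec_eq N L (op_apply N L (J \<beta> 0) \<Psi>) (\<lambda>s. op_apply N L (J \<beta> 1) \<Psi> s
      + \<i> * (op_apply N L H (op_apply N L b \<Psi>) s - E * op_apply N L b \<Psi> s))"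
      using cont[of \<beta> 0 \<Psi>] Hright[of b] unfolding vec_eq_def b_def by auto
    have "P a (J \<beta> 0) = inner N L \<Psi> (op_apply N L a (\<lambda>s. op_apply N L (J \<beta> 1) \<Psi> s
      + \<i> * (op_apply N L H (op_apply N L b \<Psi>) s - E * op_apply N L b \<Psi> s)))"
      unfolding P_def apply_cong_vec[OF v] ..
    then show ?thesis
      by (simp add: apply_vadd apply_smul apply_vdiff inner_vadd inner_smul inner_vdiff P_def)
  qed
  show "expval N L \<Psi> (op_diff (op_mult N L (J \<alpha> (x + 1)) (q \<beta> 0)) (op_mult N L (q \<alpha> (x + 1)) (J \<beta> 1)))
   = expval N L \<Psi> (op_diff (op_mult N L (J \<alpha> x) (q \<beta> 0)) (op_mult N L (q \<alpha> x) (J \<beta> 1)))"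
    unfolding ev b_def[symmetric] a_def[symmetric] tr step1 step2 Ereal
    by (simp add: algebra_simps)
qed

end
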